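(* Let $G$ be a finite group. If $(S,T,U)$ is a TPP triple of $G$ consisting of subgroups $S,T,U$ of $G$, at least one of which is normal in $G$, then $|S|\cdot|T|\cdot|U|\le |G|$.
   Context: For a nonempty subset $X$ of a group $G$, $Q(X):=\{xy^{-1}: x,y\in X\}$ (so $Q(X)=X$ for a subgroup $X$). Nonempty subsets $S,T,U$ of $G$ form a TPP triple if for all $s\in Q(S)$, $t\in Q(T)$, $u\in Q(U)$: $stu=1$ iff $s=t=u=1$. *)

theory Defs
  imports "HOL-Algebra.Algebra"
begin

definition quot_set :: "('a, 'b) monoid_scheme \<Rightarrow> 'a set \<Rightarrow> 'a set" where
  "quot_set H A = {x \<otimes>\<^bsub>H\<^esub> inv\<^bsub>H\<^esub> y | x y. x \<in> A \<and> y \<in> A}"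

definition TPP_triple :: "('a, 'b) monoid_scheme \<Rightarrow> 'a set \<Rightarrow> 'a set \<Rightarrow> 'a set \<Rightarrow> bool" where
  "TPP_triple H A B C \<longleftrightarrow>
     A \<subseteq> carrier H \<and> B \<subseteq> carrier H \<and> C \<subseteq> carrier H \<and>
     A \<noteq> {} \<and> B \<noteq> {} \<and> C \<noteq> {} \<and>
     (\<forall>s \<in> quot_set H A. \<forall>t \<in> quot_set H B. \<forall>u \<in> quot_set H C.
        (s \<otimes>\<^bsub>H\<^esub> t \<otimes>\<^bsub>H\<^esub> u = \<one>\<^bsub>H\<^esub>) \<longleftrightarrow>
        (s = \<one>\<^bsub>H\<^esub> \<and> t = \<one>\<^bsub>H\<^esub> \<and> u = \<one>\<^bsub>H\<^esub>))"

end

theory Submission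
  imports Defs
begin

context group begin
lemma cancL: "x \<in> carrier G \<Longrightarrow> y \<in> carrier G \<Longrightarrow> inv x \<otimes> (x \<otimes> y) = y"
  by (simp add: m_assoc[symmetric])
lemma cancR: "x \<in> carrier G \<Longrightarrow> y \<in> carrier G \<Longrightarrow> x \<otimes> (inv x \<otimes> y) = y"
  by (simp add: m_assoc[symmetric])
lemma t1: "\<lbrakk>a\<in>carrier G; a'\<in>carrier G; b\<in>carrier G; b'\<in>carrier G; n\<in>carrier G; n'\<in>carrier G\<rbrakk> \<Longrightarrow>
  inv a' \<otimes> a \<otimes> (b \<otimes> inv b') \<otimes> (b' \<otimes> (n \<otimes> inv n') \<otimes> inv b') = inv a' \<otimes> (a \<otimes> b \<otimes> n) \<otimes> inv n' \<otimes> inv b'"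
  by (simp add: m_assoc cancL)
lemma t2: "\<lbrakk>a'\<in>carrier G; b'\<in>carrier G;  n'\<in>carrier G\<rbrakk> \<Longrightarrow>
   inv a' \<otimes> (a' \<otimes> b' \<otimes> n') \<otimes> inv n' \<otimes> inv b' = \<one>"
  by (simp add: m_assoc cancL)
lemma t3: "\<lbrakk>a\<in>carrier G; a'\<in>carrier G; inv a' \<otimes> a = \<one>\<rbrakk> \<Longrightarrow> a = a'"
  by (metis cancR r_one)
lemma t4: "\<lbrakk>a\<in>carrier G; a'\<in>carrier G; a \<otimes> inv a' = \<one>\<rbrakk> \<Longrightarrow> a = a'"
  by (metis inv_closed inv_inv l_inv m_assoc r_one l_one)
lemma t5: "\<lbrakk>a\<in>carrier G; b\<in>carrier G; n\<in>carrier G;n'\<in>carrier G; a \<otimes> b \<otimes> n = a \<otimes> b \<otimes> n'\<rbrakk> \<Longrightarrow> n = n'"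
  by (metis l_cancel m_closed)
lemma t6: "\<lbrakk>s\<in>carrier G; t\<in>carrier G; u\<in>carrier G\<rbrakk> \<Longrightarrow> s \<otimes> t \<otimes> u = s \<otimes> (t \<otimes> u \<otimes> s) \<otimes> inv s"
  by (simp add: m_assoc)
lemma t7: "\<lbrakk>s\<in>carrier G; t\<in>carrier G; u\<in>carrier G\<rbrakk> \<Longrightarrow> s \<otimes> t \<otimes> u = inv u \<otimes> (u \<otimes> s \<otimes> t) \<otimes> u"
  by (simp add: m_assoc cancL)
end


lemma in_quot: assumes "group G" "subgroup A G" "x \<in> A" shows "x \<in> quot_set G A"
proof -
  interpret group G by fact
  have "x = x \<otimes>\<^bsub>G\<^esub> inv\<^bsub>G\<^esub> \<one>\<^bsub>G\<^esub>" using assms subgroup.subset by fastforce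
  moreover have "\<one>\<^bsub>G\<^esub> \<in> A" using assms subgroup.one_closed by blast
  ultimately show ?thesis unfolding quot_set_def using assms(3) by blast
qed

lemma key:
  fixes G (structure)
  assumes G: "group G" and fin: "finite (carrier G)"
    and A: "subgroup A G" and B: "subgroup B G" and N: "N \<lhd> G"
    and H: "\<forall>a\<in>A. \<forall>b\<in>B. \<forall>n\<in>N. a \<otimes> b \<otimes> n = \<one> \<longrightarrow> a = \<one> \<and> b = \<one> \<and> n = \<one>"
  shows "card A * card B * card N \<le> order G"
proof -
  interpret group G by fact
  have NS: "subgroup N G" using N normal_imp_subgroup by blast
  have sA: "A \<subseteq> carrier G" using A subgroup.subset by blast
  have sB: "B \<subseteq> carrier G" using B subgroup.subset by blast
  have sN: "N \<subseteq> carrier G" using NS subgroup.subset by blast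
  define f where "f = (\<lambda>(a,b,n). a \<otimes> b \<otimes> n)"
  have core: "a = a' \<and> b = b' \<and> n = n'" if  a: "a \<in> A" and b: "b \<in> B" and n: "n \<in> N" and a': "a' \<in> A" and b': "b' \<in> B" and n': "n' \<in> N"
      and eq: "f (a,b,n) = f (a',b',n')" for a b n a' b' n'
  proof -
    have ca: "a \<in> carrier G" "a' \<in> carrier G" using a a' sA by auto
    have cb: "b \<in> carrier G" "b' \<in> carrier G" using b b' sB by auto
    have cn: "n \<in> carrier G" "n' \<in> carrier G" using n n' sN by auto
    note c = ca cb cn
    define m where "m = b' \<otimes> (n \<otimes> inv n') \<otimes> inv b'"
    have nn: "n \<otimes> inv n' \<in> N" using NS n n' by (simp add: subgroup.m_closed subgroup.m_inv_closed)
    have mN: "m \<in> N" unfolding m_def using normal.inv_op_closed2[OF N cb(2) nn] .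
    have e: "a \<otimes> b \<otimes> n = a' \<otimes> b' \<otimes> n'" using eq by (simp add: f_def)
    have "inv a' \<otimes> a \<otimes> (b \<otimes> inv b') \<otimes> m = inv a' \<otimes> (a \<otimes> b \<otimes> n) \<otimes> inv n' \<otimes> inv b'"
      unfolding m_def using c by (rule t1)
    also have "\<dots> = \<one>" using c by (simp only: e t2)
    finally have "inv a' \<otimes> a \<otimes> (b \<otimes> inv b') \<otimes> m = \<one>" .
    moreover have "inv a' \<otimes> a \<in> A" using A a a' by (simp add: subgroup.m_closed subgroup.m_inv_closed)
    moreover have "b \<otimes> inv b' \<in> B" using B b b' by (simp add: subgroup.m_closed subgroup.m_inv_closed)
    ultimately have h: "inv a' \<otimes> a = \<one>" "b \<otimes> inv b' = \<one>" "m = \<one>" using H mN by blast+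
    have "a = a'" by (rule t3[OF ca h(1)])
    moreover have "b = b'" by (rule t4[OF cb h(2)])
    moreover have "n = n'" using e \<open>a = a'\<close> \<open>b = b'\<close> t5[OF ca(2) cb(2) cn] by simp
    ultimately show "a = a' \<and> b = b' \<and> n = n'" by simp
  qed
  have inj: "inj_on f (A \<times> B \<times> N)"
    unfolding inj_on_def using core by fast
  have img: "f ` (A \<times> B \<times> N) \<subseteq> carrier G" using sA sB sN by (auto simp: f_def)
  have "card (A \<times> B \<times> N) \<le> card (carrier G)" by (rule card_inj_on_le[OF inj img fin])
  thus ?thesis by (simp add: card_cartesian_product order_def mult.assoc)
qed

theorem mainTheorem3:
  fixes G (structure) and S T U :: "'a set"
  assumes "group G" and "finite (carrier G)"
    and "subgroup S G" and "subgroup T G" and "subgroup U G"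
    and "TPP_triple G S T U"
    and "S \<lhd> G \<or> T \<lhd> G \<or> U \<lhd> G"
  shows "card S * card T * card U \<le> order G"
proof -
  interpret group G by fact
  have sS: "S \<subseteq> carrier G" using assms subgroup.subset by blast
  have sT: "T \<subseteq> carrier G" using assms subgroup.subset by blast
  have sU: "U \<subseteq> carrier G" using assms subgroup.subset by blast
  have P: "\<And>s t u. s \<in> S \<Longrightarrow> t \<in> T \<Longrightarrow> u \<in> U \<Longrightarrow> s \<otimes> t \<otimes> u = \<one> \<Longrightarrow> s = \<one> \<and> t = \<one> \<and> u = \<one>"
  proof -
    fix s t u assume "s \<in> S" "t \<in> T" "u \<in> U" "s \<otimes> t \<otimes> u = \<one>"
    moreover have q: "s \<in> quot_set G S" "t \<in> quot_set G T" "u \<in> quot_set G U"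
      using in_quot[OF assms(1)] assms(3,4,5) calculation by blast+
    have A6: "\<forall>s \<in> quot_set G S. \<forall>t \<in> quot_set G T. \<forall>u \<in> quot_set G U.
        (s \<otimes> t \<otimes> u = \<one>) \<longleftrightarrow> (s = \<one> \<and> t = \<one> \<and> u = \<one>)"
      using assms(6) unfolding TPP_triple_def by (elim conjE)
    show "s = \<one> \<and> t = \<one> \<and> u = \<one>" using A6 q \<open>s \<otimes> t \<otimes> u = \<one>\<close> by simp
  qed
  from assms(7) show ?thesis
  proof (elim disjE)
    assume N: "S \<lhd> G"
    have "card T * card U * card S \<le> order G"
    proof (rule key[OF assms(1,2,4,5) N], intro ballI impI)
      fix t u s assume m: "t \<in> T" "u \<in> U" "s \<in> S" "t \<otimes> u \<otimes> s = \<one>"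
      have c: "t \<in> carrier G" "u \<in> carrier G" "s \<in> carrier G" using m sS sT sU by auto
      have "s \<otimes> t \<otimes> u = s \<otimes> (t \<otimes> u \<otimes> s) \<otimes> inv s" by (rule t6[OF c(3) c(1) c(2)])
      also have "\<dots> = \<one>" using c m by simp
      finally show "t = \<one> \<and> u = \<one> \<and> s = \<one>" using P m by blast
    qed
    thus ?thesis by (simp add: mult_ac)
  next
    assume N: "T \<lhd> G"
    have "card U * card S * card T \<le> order G"
    proof (rule key[OF assms(1,2,5,3) N], intro ballI impI)
      fix u s t assume m: "u \<in> U" "s \<in> S" "t \<in> T" "u \<otimes> s \<otimes> t = \<one>"
      have c: "t \<in> carrier G" "u \<in> carrier G" "s \<in> carrier G" using m sS sT sU by auto
      have "s \<otimes> t \<otimes> u = inv u \<otimes> (u \<otimes> s \<otimes> t) \<otimes> u" by (rule t7[OF c(3) c(1) c(2)])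
      also have "\<dots> = \<one>" using c m by simp
      finally show "u = \<one> \<and> s = \<one> \<and> t = \<one>" using P m by blast
    qed
    thus ?thesis by (simp add: mult_ac)
  next
    assume N: "U \<lhd> G"
    show ?thesis
    proof (rule key[OF assms(1,2,3,4) N], intro ballI impI)
      fix s t u assume m: "s \<in> S" "t \<in> T" "u \<in> U" "s \<otimes> t \<otimes> u = \<one>"
      thus "s = \<one> \<and> t = \<one> \<and> u = \<one>" using P by blast
    qed
  qed
qed

end
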